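(* Let $\beta_t>0$ for $t\in[0,1]$, set the base drift $f:=0$, and consider the Schr\"odinger bridge $\mathrm{d}X_t=\beta_t\nabla\log\Psi(X_t,t)\mathrm{d}t+\sqrt{\beta_t}\mathrm{d}W_t$ (equivalently $\mathrm{d}X_t=-\beta_t\nabla\log\widehat\Psi(X_t,t)\mathrm{d}t+\sqrt{\beta_t}\mathrm{d}\overline W_t$) between boundary distributions at $t=0$ and $t=1$. Define $\sigma_t^2:=\int_0^t\beta_\tau\,\mathrm{d}\tau$ and $\bar\sigma_t^2:=\int_t^1\beta_\tau\,\mathrm{d}\tau$. Then the posterior of $X_t$ given the boundary pair $(X_0,X_1)$ is $$q(X_t\mid X_0,X_1)=\mathcal N\big(X_t;\mu_t(X_0,X_1),\Sigma_t\big),\quad \mu_t=\frac{\bar\sigma_t^2}{\bar\sigma_t^2+\sigma_t^2}X_0+\frac{\sigma_t^2}{\bar\sigma_t^2+\sigma_t^2}X_1,\quad \Sigma_t=\frac{\sigma_t^2\bar\sigma_t^2}{\bar\sigma_t^2+\sigma_t^2}I.$$ Moreover, for a time discretization $0=t_0<\dots<t_N=1$ with $X_n:=X_{t_n}$, let $p(X_n\mid X_0,X_{n+1})$ denote the DDPM posterior, i.e. the conditional density of $X_{t_n}$ given $X_0$ and $X_{t_{n+1}}$ under the process $\mathrm{d}X_t=\sqrt{\beta_t}\,\mathrm{d}W_t$ started at $X_0$. Then for every $0\le n\le N-1$, $$q(X_n\mid X_0,X_N)=\int\prod_{k=n}^{N-1}p(X_k\mid X_0,X_{k+1})\,\mathr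m{d}X_{n+1}\cdots\mathrm{d}X_{N-1}.$$
   Context: $W_t$ is a standard $d$-dimensional Wiener process, $\overline W_t$ its reversed-time counterpart, and $\Psi,\widehat\Psi$ are the Schr\"odinger bridge potentials, solving $\partial_t\Psi=-\tfrac12\beta_t\Delta\Psi$, $\partial_t\widehat\Psi=\tfrac12\beta_t\Delta\widehat\Psi$ (the system with $f=0$) with $\Psi(\cdot,0)\widehat\Psi(\cdot,0)$ and $\Psi(\cdot,1)\widehat\Psi(\cdot,1)$ equal to the boundary densities at $t=0$ and $t=1$. $I$ is the $d\times d$ identity. Explicitly, with $\alpha_n^2:=\int_{t_n}^{t_{n+1}}\beta_\tau\mathrm{d}\tau$, $p(X_n\mid X_0,X_{n+1})=\mathcal N\big(X_n;\frac{\alpha_n^2}{\alpha_n^2+\sigma_{t_n}^2}X_0+\frac{\sigma_{t_n}^2}{\alpha_n^2+\sigma_{t_n}^2}X_{n+1},\frac{\sigma_{t_n}^2\alpha_n^2}{\alpha_n^2+\sigma_{t_n}^2}I\big)$. *)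

theory Defs
  imports "HOL-Probability.Probability"
begin

definition gdens :: "real \<Rightarrow> real^'d \<Rightarrow> real^'d \<Rightarrow> real" where
  "gdens v m x = (2 * pi * v) powr (- real CARD('d) / 2) * exp (- (norm (x - m))\<^sup>2 / (2 * v))"

definition sig2 :: "(real \<Rightarrow> real) \<Rightarrow> real \<Rightarrow> real" where
  "sig2 \<beta> t = integral {0..t} \<beta>"

definition sigbar2 :: "(real \<Rightarrow> real) \<Rightarrow> real \<Rightarrow> real" where
  "sigbar2 \<beta> t = integral {t..1} \<beta>"

text \<open>Transition density of the reference process dX = sqrt(beta_t) dW from x at time s
  to y at time u (s < u): N(y; x, (int_s^u beta) I).\<close>
definition kern :: "(real \<Rightarrow> real) \<Rightarrow> real \<Rightarrow> real \<Rightarrow> real^'d \<Rightarrow> real^'d \<Rightarrow> real" where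
  "kern \<beta> s u x y = gdens (integral {s..u} \<beta>) x y"

text \<open>Joint density of (X_0, X_t, X_1) under the Schroedinger bridge with potentials
  Psi, hatPsi (path measure hatPsi(X_0,0) Psi(X_1,1) times the reference path measure).\<close>
definition sb_joint3 ::
  "(real \<Rightarrow> real) \<Rightarrow> (real^'d \<Rightarrow> real \<Rightarrow> real) \<Rightarrow> (real^'d \<Rightarrow> real \<Rightarrow> real)
     \<Rightarrow> real \<Rightarrow> real^'d \<Rightarrow> real^'d \<Rightarrow> real^'d \<Rightarrow> real" where
  "sb_joint3 \<beta> \<Psi> \<Psi>h t x0 x x1 =
     \<Psi>h x0 0 * kern \<beta> 0 t x0 x * kern \<beta> t 1 x x1 * \<Psi> x1 1"

definition sb_post ::
  "(real \<Rightarrow> real) \<Rightarrow> (real^'d \<Rightarrow> real \<Rightarrow> real) \<Rightarrow> (real^'d \<Rightarrow> real \<Rightarrow> real)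
     \<Rightarrow> real \<Rightarrow> real^'d \<Rightarrow> real^'d \<Rightarrow> real^'d \<Rightarrow> real" where
  "sb_post \<beta> \<Psi> \<Psi>h t x0 x1 x =
     sb_joint3 \<beta> \<Psi> \<Psi>h t x0 x x1 / (\<integral>y. sb_joint3 \<beta> \<Psi> \<Psi>h t x0 y x1 \<partial>lborel)"

text \<open>DDPM posterior p(X_s = x | X_0 = x0, X_u = xu) (0 < s < u) of the reference process
  dX = sqrt(beta_t) dW started at x0: Bayes' rule.\<close>
definition ddpm_post ::
  "(real \<Rightarrow> real) \<Rightarrow> real \<Rightarrow> real \<Rightarrow> real^'d \<Rightarrow> real^'d \<Rightarrow> real^'d \<Rightarrow> real" where
  "ddpm_post \<beta> s u x0 xu x = kern \<beta> 0 s x0 x * kern \<beta> s u x xu / kern \<beta> 0 u x0 xu"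

end

theory Submission
  imports Defs
begin


lemma beta_int_pos:
  fixes \<beta> :: "real \<Rightarrow> real"
  assumes pos: "\<forall>t\<in>{0..1}. \<beta> t > 0" and int: "\<beta> integrable_on {0..1}"
    and st: "0 \<le> s" "s < u" "u \<le> 1"
  shows "integral {s..u} \<beta> > 0"
proof -
  have intsu: "\<beta> integrable_on {s..u}"
    using integrable_subinterval_real[OF int] st by auto
  have pp: "\<And>x. x \<in> {s..u} \<Longrightarrow> 0 < \<beta> x"
  proof -
    fix x assume "x \<in> {s..u}"
    then have "x \<in> {0..1}" using st by auto
    then show "0 < \<beta> x" using pos by simp
  qed
  have nn: "\<And>x. x \<in> {s..u} \<Longrightarrow> 0 \<le> \<beta> x" using pp by (simp add: less_imp_le)
  have L: "integrable (lebesgue_on {s..u}) \<beta>"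
    by (rule absolutely_integrable_imp_integrable[OF nonnegative_absolutely_integrable_1[OF intsu nn]]) auto
  have eq: "integral\<^sup>L (lebesgue_on {s..u}) \<beta> = integral {s..u} \<beta>"
    using L by (intro lebesgue_integral_eq_integral) auto
  have ge: "integral {s..u} \<beta> \<ge> 0"
    using intsu nn by (intro integral_nonneg) auto
  have ne: "integral {s..u} \<beta> \<noteq> 0"
  proof
    assume "integral {s..u} \<beta> = 0"
    then have "AE x in lebesgue_on {s..u}. \<beta> x = 0"
      using integral_nonneg_eq_0_iff_AE[OF L] eq nn
      by (simp add: AE_restrict_space_iff)
    moreover have "AE x in lebesgue_on {s..u}. \<beta> x \<noteq> 0"
      using pp by (intro AE_I2) (force simp: space_restrict_space)
    ultimately have "AE x in lebesgue_on {s..u}. False" by eventually_elim auto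
    then have "emeasure (lebesgue_on {s..u}) (space (lebesgue_on {s..u})) = 0"
      by (metis ae_filter_eq_bot_iff trivial_limit_def)
    moreover have "emeasure (lebesgue_on {s..u}) (space (lebesgue_on {s..u})) = ennreal (u - s)"
      using st by (simp add: emeasure_restrict_space space_restrict_space)
    ultimately show False using st by simp
  qed
  show ?thesis using ge ne by simp
qed

lemma beta_int_add:
  fixes \<beta> :: "real \<Rightarrow> real"
  assumes int: "\<beta> integrable_on {0..1}" and st: "0 \<le> s" "s \<le> t" "t \<le> u" "u \<le> 1"
  shows "integral {s..t} \<beta> + integral {t..u} \<beta> = integral {s..u} \<beta>"
  using Henstock_Kurzweil_Integration.integral_combine[OF st(2,3) integrable_subinterval_real[OF int]] st by auto




lemma gdens_pos: "v > 0 \<Longrightarrow> gdens v m x > 0"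
  unfolding gdens_def by simp

lemma norm_sq_basis: "(norm (y::'a::euclidean_space))\<^sup>2 = (\<Sum>b\<in>Basis. (y \<bullet> b)\<^sup>2)"
  by (subst power2_norm_eq_inner) (simp add: euclidean_inner[of y y] power2_eq_square)

lemma gdens_prod:
  fixes m x :: "real^'d"
  assumes v: "v > 0"
  shows "gdens v m x = (\<Prod>b\<in>Basis. normal_density (m \<bullet> b) (sqrt v) (x \<bullet> b))"
proof -
  have cB: "card (Basis :: (real^'d) set) = CARD('d)"
    using DIM_cart[where 'a=real and 'b='d] by simp
  have "(\<Prod>b\<in>(Basis::(real^'d) set). normal_density (m \<bullet> b) (sqrt v) (x \<bullet> b))
      = (\<Prod>b\<in>(Basis::(real^'d) set). ((2 * pi * v) powr (-1/2)) * exp (- (((x - m) \<bullet> b)\<^sup>2) / (2 * v)))"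
    unfolding normal_density_def using v
    by (intro prod.cong refl) (simp add: inner_diff_left powr_minus_divide powr_half_sqrt)
  also have "\<dots> = ((2 * pi * v) powr (-1/2)) ^ CARD('d) * exp (\<Sum>b\<in>(Basis::(real^'d) set). - ((x - m) \<bullet> b)\<^sup>2 / (2 * v))"
    by (simp add: prod.distrib exp_sum cB)
  also have "((2 * pi * v) powr (-1/2)) ^ CARD('d) = (2 * pi * v) powr (- real CARD('d) / 2)"
    using v by (simp add: powr_realpow[symmetric] powr_powr)
  also have "(\<Sum>b\<in>(Basis::(real^'d) set). - ((x - m) \<bullet> b)\<^sup>2 / (2 * v)) = - (norm (x - m))\<^sup>2 / (2 * v)"
    by (simp add: norm_sq_basis[of "x - m"] sum_divide_distrib[symmetric] sum_negf)
  finally show ?thesis unfolding gdens_def by simp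
qed

lemma gdens_borel[measurable]: "(\<lambda>x. gdens v m x) \<in> borel_measurable borel"
  unfolding gdens_def by measurable

lemma gdens_nn_integral:
  fixes m :: "real^'d"
  assumes v: "v > 0"
  shows "(\<integral>\<^sup>+x. ennreal (gdens v m x) \<partial>lborel) = 1"
proof -
  have "(\<integral>\<^sup>+x. ennreal (gdens v m x) \<partial>lborel)
     = (\<integral>\<^sup>+x. (\<Prod>b\<in>(Basis::(real^'d) set). ennreal (normal_density (m \<bullet> b) (sqrt v) (x \<bullet> b))) \<partial>lborel)"
    using v by (intro nn_integral_cong) (simp add: gdens_prod prod_ennreal)
  also have "\<dots> = (\<Prod>b\<in>(Basis::(real^'d) set). (\<integral>\<^sup>+y. ennreal (normal_density (m \<bullet> b) (sqrt v) y) \<partial>lborel))"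
    by (rule nn_integral_lborel_prod) auto
  also have "\<dots> = 1"
  proof (intro prod.neutral ballI)
    fix b :: "real^'d"
    show "(\<integral>\<^sup>+y. ennreal (normal_density (m \<bullet> b) (sqrt v) y) \<partial>lborel) = 1"
      using v by (subst nn_integral_eq_integral) (auto intro: integrable_normal_density integral_normal_density)
  qed
  finally show ?thesis .
qed

lemma gdens_integral:
  fixes m :: "real^'d"
  assumes v: "v > 0"
  shows "(\<integral>x. gdens v m x \<partial>lborel) = 1"
  using gdens_nn_integral[OF v, of m] v
  by (subst integral_eq_nn_integral) (auto intro: less_imp_le gdens_pos)



lemma sqL: fixes a b q u w :: real assumes nz: "a \<noteq> 0" "b \<noteq> 0" shows "(u\<^sup>2 / (2 * a) + w\<^sup>2 / (2 * b)) * (2 * a * b * q) = u\<^sup>2 * b * q + w\<^sup>2 * a * q"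
          using nz by (simp add: distrib_right)
lemma sqR: fixes a b q u w :: real assumes nz: "a \<noteq> 0" "b \<noteq> 0" "q \<noteq> 0" shows "((u + w)\<^sup>2 / (2 * q) + (b * u - a * w)\<^sup>2 / (2 * a * b * q)) * (2 * a * b * q)
             = (u + w)\<^sup>2 * a * b + (b * u - a * w)\<^sup>2"
          using nz by (simp add: distrib_right)
lemma sqP: fixes a b q u w :: real shows "q = a + b \<Longrightarrow> u\<^sup>2 * b * q + w\<^sup>2 * a * q = (u + w)\<^sup>2 * a * b + (b * u - a * w)\<^sup>2"
          unfolding power2_eq_square by (simp add: algebra_simps)

lemma sq_ident:
  fixes a b X Y Z :: real
  assumes a: "a > 0" and b: "b > 0"
  shows "(Y - X)\<^sup>2 / (2 * a) + (Z - Y)\<^sup>2 / (2 * b)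
       = (Z - X)\<^sup>2 / (2 * (a + b)) + (Y - (b / (a + b) * X + a / (a + b) * Z))\<^sup>2 / (2 * (a * b / (a + b)))"
proof -
  have s: "a + b > 0" using a b by simp
  have nz: "a \<noteq> 0" "b \<noteq> 0" "a + b \<noteq> 0" using a b s by auto
  have e: "Y - (b / (a + b) * X + a / (a + b) * Z) = (b * (Y - X) - a * (Z - Y)) / (a + b)"
  proof -
    have "(b * (Y - X) - a * (Z - Y)) / (a + b) = ((a + b) * Y - (b * X + a * Z)) / (a + b)"
      by (simp add: algebra_simps)
    also have "\<dots> = Y - (b * X + a * Z) / (a + b)"
      using s by (simp add: diff_divide_distrib)
    also have "(b * X + a * Z) / (a + b) = b / (a + b) * X + a / (a + b) * Z"
      by (simp add: add_divide_distrib)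
    finally show ?thesis by simp
  qed
  have k: "(Z - X) = (Y - X) + (Z - Y)" by simp
  define u where "u = Y - X"
  define w where "w = Z - Y"
  define p where "p = b * u - a * w"
  define q where "q = a + b"
  have qnz: "q \<noteq> 0" using nz q_def by simp
  have r: "(p / q)\<^sup>2 / (2 * (a * b / q)) = p\<^sup>2 / (2 * a * b * q)"
    using nz qnz by (simp add: power2_eq_square field_simps)
  have d: "2 * a * b * q \<noteq> 0" using nz qnz by simp
  have m: "u\<^sup>2 / (2 * a) + w\<^sup>2 / (2 * b) = (u + w)\<^sup>2 / (2 * q) + p\<^sup>2 / (2 * a * b * q)"
  proof -
    have "(u\<^sup>2 / (2 * a) + w\<^sup>2 / (2 * b)) * (2 * a * b * q) = ((u + w)\<^sup>2 / (2 * q) + p\<^sup>2 / (2 * a * b * q)) * (2 * a * b * q)"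
      unfolding sqL[OF nz(1,2)] sqR[OF nz(1,2) qnz] p_def using sqP[OF q_def] by simp
    then show ?thesis using d by simp
  qed
  show ?thesis unfolding e using m r k unfolding u_def[symmetric] w_def[symmetric] p_def[symmetric] q_def[symmetric]
    by simp
qed



lemma norm_ident:
  fixes x y z :: "'a::euclidean_space"
  assumes a: "a > 0" and b: "b > 0"
  shows "(norm (y - x))\<^sup>2 / (2 * a) + (norm (z - y))\<^sup>2 / (2 * b)
       = (norm (z - x))\<^sup>2 / (2 * (a + b)) + (norm (y - ((b / (a + b)) *\<^sub>R x + (a / (a + b)) *\<^sub>R z)))\<^sup>2 / (2 * (a * b / (a + b)))"
proof -
  let ?m = "(b / (a + b)) *\<^sub>R x + (a / (a + b)) *\<^sub>R z"
  have c: "\<And>e. ((y - x) \<bullet> e)\<^sup>2 / (2 * a) + ((z - y) \<bullet> e)\<^sup>2 / (2 * b)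
      = ((z - x) \<bullet> e)\<^sup>2 / (2 * (a + b)) + ((y - ?m) \<bullet> e)\<^sup>2 / (2 * (a * b / (a + b)))"
  proof -
    fix e :: 'a
    have eq: "?m \<bullet> e = b / (a + b) * (x \<bullet> e) + a / (a + b) * (z \<bullet> e)"
      by (simp add: inner_add_left)
    show "?thesis e"
      unfolding inner_diff_left eq by (rule sq_ident[OF a b])
  qed
  have "(norm (y - x))\<^sup>2 / (2 * a) + (norm (z - y))\<^sup>2 / (2 * b)
     = (\<Sum>e\<in>Basis. ((y - x) \<bullet> e)\<^sup>2 / (2 * a) + ((z - y) \<bullet> e)\<^sup>2 / (2 * b))"
    by (simp only: norm_sq_basis sum_divide_distrib sum.distrib)
  also have "\<dots> = (\<Sum>e\<in>Basis. ((z - x) \<bullet> e)\<^sup>2 / (2 * (a + b)) + ((y - ?m) \<bullet> e)\<^sup>2 / (2 * (a * b / (a + b))))"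
    using c by simp
  also have "\<dots> = (norm (z - x))\<^sup>2 / (2 * (a + b)) + (norm (y - ?m))\<^sup>2 / (2 * (a * b / (a + b)))"
    by (simp only: norm_sq_basis sum_divide_distrib sum.distrib)
  finally show ?thesis .
qed

lemma gdens_mult:
  fixes x y z :: "real^'d"
  assumes a: "a > 0" and b: "b > 0"
  shows "gdens a x y * gdens b y z
       = gdens (a + b) x z * gdens (a * b / (a + b)) ((b / (a + b)) *\<^sub>R x + (a / (a + b)) *\<^sub>R z) y"
proof -
  let ?p = "- real CARD('d) / 2"
  let ?m = "(b / (a + b)) *\<^sub>R x + (a / (a + b)) *\<^sub>R z"
  have n1: "0 \<le> 2 * pi * a" "0 \<le> 2 * pi * b" "0 \<le> 2 * pi * (a + b)" "0 \<le> 2 * pi * (a * b / (a + b))"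
    using a b by auto
  have pf: "(2 * pi * a) powr ?p * (2 * pi * b) powr ?p = (2 * pi * (a + b)) powr ?p * (2 * pi * (a * b / (a + b))) powr ?p"
  proof -
    have e: "(2 * pi * a) * (2 * pi * b) = (2 * pi * (a + b)) * (2 * pi * (a * b / (a + b)))"
      using a b by (simp add: field_simps)
    have "(2 * pi * a) powr ?p * (2 * pi * b) powr ?p = ((2 * pi * a) * (2 * pi * b)) powr ?p"
      by (rule powr_mult[symmetric])
    also have "\<dots> = ((2 * pi * (a + b)) * (2 * pi * (a * b / (a + b)))) powr ?p" by (simp only: e)
    also have "\<dots> = (2 * pi * (a + b)) powr ?p * (2 * pi * (a * b / (a + b))) powr ?p"
      by (rule powr_mult)
    finally show ?thesis .
  qed
  have ex: "exp (- (norm (y - x))\<^sup>2 / (2 * a)) * exp (- (norm (z - y))\<^sup>2 / (2 * b))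
     = exp (- (norm (z - x))\<^sup>2 / (2 * (a + b))) * exp (- (norm (y - ?m))\<^sup>2 / (2 * (a * b / (a + b))))"
  proof -
    have "- (norm (y - x))\<^sup>2 / (2 * a) + - (norm (z - y))\<^sup>2 / (2 * b)
        = - (norm (z - x))\<^sup>2 / (2 * (a + b)) + - (norm (y - ?m))\<^sup>2 / (2 * (a * b / (a + b)))"
      using norm_ident[OF a b, of y x z] by (simp only: minus_divide_left[symmetric] minus_add_distrib[symmetric])
    then show ?thesis by (simp only: exp_add[symmetric])
  qed
  have "gdens a x y * gdens b y z = ((2 * pi * a) powr ?p * (2 * pi * b) powr ?p)
      * (exp (- (norm (y - x))\<^sup>2 / (2 * a)) * exp (- (norm (z - y))\<^sup>2 / (2 * b)))"
    unfolding gdens_def by (simp only: ac_simps)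
  also have "\<dots> = ((2 * pi * (a + b)) powr ?p * (2 * pi * (a * b / (a + b))) powr ?p)
      * (exp (- (norm (z - x))\<^sup>2 / (2 * (a + b))) * exp (- (norm (y - ?m))\<^sup>2 / (2 * (a * b / (a + b)))))"
    by (simp only: pf ex)
  also have "\<dots> = gdens (a + b) x z * gdens (a * b / (a + b)) ?m y"
    unfolding gdens_def by (simp only: ac_simps)
  finally show ?thesis .
qed




lemma gdens_meas[measurable]:
  fixes f g :: "'b \<Rightarrow> real^'d"
  assumes [measurable]: "f \<in> borel_measurable M" "g \<in> borel_measurable M"
  shows "(\<lambda>w. gdens v (f w) (g w)) \<in> borel_measurable M"
  unfolding gdens_def by measurable

lemma kern_meas[measurable]:
  fixes f g :: "'b \<Rightarrow> real^'d"
  assumes [measurable]: "f \<in> borel_measurable M" "g \<in> borel_measurable M"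
  shows "(\<lambda>w. kern \<beta> s u (f w) (g w)) \<in> borel_measurable M"
  unfolding kern_def by measurable

lemma kern_pos:
  fixes \<beta> :: "real \<Rightarrow> real"
  assumes pos: "\<forall>t\<in>{0..1}. \<beta> t > 0" and int: "\<beta> integrable_on {0..1}"
    and st: "0 \<le> s" "s < u" "u \<le> 1"
  shows "kern \<beta> s u x y > 0"
  unfolding kern_def using beta_int_pos[OF pos int st] by (rule gdens_pos)

lemma CK:
  fixes \<beta> :: "real \<Rightarrow> real" and x z :: "real^'d"
  assumes pos: "\<forall>t\<in>{0..1}. \<beta> t > 0" and int: "\<beta> integrable_on {0..1}"
    and st: "0 \<le> s" "s < t" "t < u" "u \<le> 1"
  shows "(\<integral>\<^sup>+y. ennreal (kern \<beta> s t x y * kern \<beta> t u y z) \<partial>lborel) = ennreal (kern \<beta> s u x z)"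
proof -
  define a where "a = integral {s..t} \<beta>"
  define b where "b = integral {t..u} \<beta>"
  have a: "a > 0" unfolding a_def using beta_int_pos[OF pos int] st by auto
  have b: "b > 0" unfolding b_def using beta_int_pos[OF pos int] st by auto
  have ab: "a + b = integral {s..u} \<beta>" unfolding a_def b_def using beta_int_add[OF int] st by auto
  let ?m = "(b / (a + b)) *\<^sub>R x + (a / (a + b)) *\<^sub>R z"
  have "(\<integral>\<^sup>+y. ennreal (kern \<beta> s t x y * kern \<beta> t u y z) \<partial>lborel)
      = (\<integral>\<^sup>+y. ennreal (gdens (a + b) x z) * ennreal (gdens (a * b / (a + b)) ?m y) \<partial>lborel)"
    unfolding kern_def a_def[symmetric] b_def[symmetric]
    using a b by (intro nn_integral_cong) (simp add: gdens_mult ennreal_mult' less_imp_le gdens_pos)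
  also have "\<dots> = ennreal (gdens (a + b) x z) * (\<integral>\<^sup>+y. ennreal (gdens (a * b / (a + b)) ?m y) \<partial>lborel)"
    by (rule nn_integral_cmult) measurable
  also have "\<dots> = ennreal (gdens (a + b) x z)"
    using a b by (simp add: gdens_nn_integral)
  finally show ?thesis unfolding ab kern_def .
qed

lemma CK_integral:
  fixes \<beta> :: "real \<Rightarrow> real" and x z :: "real^'d"
  assumes pos: "\<forall>t\<in>{0..1}. \<beta> t > 0" and int: "\<beta> integrable_on {0..1}"
    and st: "0 \<le> s" "s < t" "t < u" "u \<le> 1"
  shows "(\<integral>y. kern \<beta> s t x y * kern \<beta> t u y z \<partial>lborel) = kern \<beta> s u x z"
proof -
  have nn: "\<And>y. 0 \<le> kern \<beta> s t x y * kern \<beta> t u y z"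
  proof -
    fix y
    have h: "0 \<le> t" "s < u" "t \<le> 1" using st by auto
    show "0 \<le> kern \<beta> s t x y * kern \<beta> t u y z"
      using kern_pos[OF pos int st(1,2) h(3), of x y] kern_pos[OF pos int h(1) st(3,4), of y z] by simp
  qed
  have "(\<integral>y. kern \<beta> s t x y * kern \<beta> t u y z \<partial>lborel) = enn2real (ennreal (kern \<beta> s u x z))"
    using nn by (subst integral_eq_nn_integral) (auto simp: CK[OF pos int st])
  also have "\<dots> = kern \<beta> s u x z" using kern_pos[OF pos int st(1) _ st(4), of x z] st by simp
  finally show ?thesis .
qed

lemma sb_post_eq:
  fixes \<beta> :: "real \<Rightarrow> real" and pa pb x :: "real^'d"
  assumes pos: "\<forall>t\<in>{0..1}. \<beta> t > 0" and int: "\<beta> integrable_on {0..1}"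
    and t: "0 < t" "t < 1" and c: "\<Psi>h pa 0 * \<Psi> pb 1 > 0"
  shows "sb_post \<beta> \<Psi> \<Psi>h t pa pb x = kern \<beta> 0 t pa x * kern \<beta> t 1 x pb / kern \<beta> 0 1 pa pb"
proof -
  let ?c = "\<Psi>h pa 0 * \<Psi> pb 1"
  have "(\<integral>y. sb_joint3 \<beta> \<Psi> \<Psi>h t pa y pb \<partial>lborel) = (\<integral>y. ?c * (kern \<beta> 0 t pa y * kern \<beta> t 1 y pb) \<partial>lborel)"
    unfolding sb_joint3_def by (simp only: ac_simps)
  also have "\<dots> = ?c * kern \<beta> 0 1 pa pb"
    using CK_integral[OF pos int, of 0 t 1 pa pb] t by simp
  finally have den: "(\<integral>y. sb_joint3 \<beta> \<Psi> \<Psi>h t pa y pb \<partial>lborel) = ?c * kern \<beta> 0 1 pa pb" .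
  have num: "sb_joint3 \<beta> \<Psi> \<Psi>h t pa x pb = ?c * (kern \<beta> 0 t pa x * kern \<beta> t 1 x pb)"
    unfolding sb_joint3_def by (simp only: ac_simps)
  have "\<Psi>h pa 0 \<noteq> 0" "\<Psi> pb 1 \<noteq> 0" using c by auto
  then show ?thesis unfolding sb_post_def den num by simp
qed

lemma part1:
  fixes \<beta> :: "real \<Rightarrow> real" and x0 x1 x :: "real^'d"
  assumes pos: "\<forall>t\<in>{0..1}. \<beta> t > 0" and int: "\<beta> integrable_on {0..1}"
    and t: "0 < t" "t < 1" and c: "\<Psi>h x0 0 * \<Psi> x1 1 > 0"
  shows "sb_post \<beta> \<Psi> \<Psi>h t x0 x1 x =
          gdens (sig2 \<beta> t * sigbar2 \<beta> t / (sigbar2 \<beta> t + sig2 \<beta> t))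
                ((sigbar2 \<beta> t / (sigbar2 \<beta> t + sig2 \<beta> t)) *\<^sub>R x0
                   + (sig2 \<beta> t / (sigbar2 \<beta> t + sig2 \<beta> t)) *\<^sub>R x1) x"
proof -
  define a where "a = sig2 \<beta> t"
  define b where "b = sigbar2 \<beta> t"
  have a: "a > 0" unfolding a_def sig2_def using beta_int_pos[OF pos int] t by auto
  have b: "b > 0" unfolding b_def sigbar2_def using beta_int_pos[OF pos int] t by auto
  have ab: "a + b = integral {0..1} \<beta>" unfolding a_def b_def sig2_def sigbar2_def
    using beta_int_add[OF int] t by auto
  have k01: "kern \<beta> 0 1 x0 x1 = gdens (a + b) x0 x1" unfolding kern_def ab ..
  have kk: "kern \<beta> 0 t x0 x * kern \<beta> t 1 x x1 = gdens (a + b) x0 x1 * gdens (a * b / (a + b)) ((b / (a + b)) *\<^sub>R x0 + (a / (a + b)) *\<^sub>R x1) x"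
    unfolding kern_def using gdens_mult[OF a b, of x0 x x1] unfolding a_def b_def sig2_def sigbar2_def by simp
  have "sb_post \<beta> \<Psi> \<Psi>h t x0 x1 x = gdens (a * b / (a + b)) ((b / (a + b)) *\<^sub>R x0 + (a / (a + b)) *\<^sub>R x1) x"
    unfolding sb_post_eq[where \<Psi>h=\<Psi>h and \<Psi>=\<Psi> and pa=x0 and pb=x1, OF pos int t c] kk k01 using gdens_pos[of "a + b" x0 x1] a b by simp
  then show ?thesis unfolding a_def b_def by (simp add: add.commute)
qed




lemma gdens_nonneg: "0 \<le> gdens v m x"
  unfolding gdens_def by simp

lemma upd_comp_meas[measurable]:
  fixes x z :: "real^'d" and a c j :: 'i
  shows "(\<lambda>X. (X(a := x, c := z)) j) \<in> borel_measurable (Pi\<^sub>M J (\<lambda>_. lborel))"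
proof (cases "j = c \<or> j = a")
  case True then show ?thesis by (cases "j = c") auto
next
  case False
  then have eq: "\<And>X. (X(a := x, c := z)) j = X j" by auto
  show ?thesis
  proof (cases "j \<in> J")
    case True then show ?thesis unfolding eq using measurable_component_singleton[OF True, of "\<lambda>_. lborel"] by (simp add: measurable_lborel2)
  next
    case nj: False
    have "(\<lambda>X. (X(a := x, c := z)) j) \<in> borel_measurable (Pi\<^sub>M J (\<lambda>_. lborel))
        \<longleftrightarrow> (\<lambda>X::'i\<Rightarrow>real^'d. undefined :: real^'d) \<in> borel_measurable (Pi\<^sub>M J (\<lambda>_. lborel))"
    proof (intro measurable_cong)
      fix X assume "X \<in> space (Pi\<^sub>M J (\<lambda>_. lborel :: (real^'d) measure))"
      then have "X \<in> PiE J (\<lambda>_. space (lborel :: (real^'d) measure))" by (simp add: space_PiM)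
      then show "(X(a := x, c := z)) j = undefined" unfolding eq using PiE_arb[OF _ nj] by blast
    qed
    then show ?thesis by simp
  qed
qed

lemma tt_mono:
  fixes tt :: "nat \<Rightarrow> real"
  assumes inc: "\<forall>k. a \<le> k \<and> k < b \<longrightarrow> tt k < tt (Suc k)"
    and ij: "a \<le> i" "i < j" "j \<le> b"
  shows "tt i < tt j"
  using ij
proof (induction j rule: less_induct)
  case (less j)
  then obtain j' where j: "j = Suc j'" by (cases j) auto
  show ?case
  proof (cases "i = j'")
    case True then show ?thesis using inc less.prems j by auto
  next
    case False
    then have "tt i < tt j'" using less.IH[of j'] less.prems j by auto
    also have "tt j' < tt j" using inc less.prems j by auto
    finally show ?thesis .
  qed
qed

lemma chain:
  fixes \<beta> :: "real \<Rightarrow> real" and tt :: "nat \<Rightarrow> real" and x :: "real^'d"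
  assumes pos: "\<forall>t\<in>{0..1}. \<beta> t > 0" and int: "\<beta> integrable_on {0..1}"
    and inc: "\<forall>k. a \<le> k \<and> k < B \<longrightarrow> tt k < tt (Suc k)"
    and t0: "0 \<le> tt a" and t1: "tt B \<le> 1"
    and ab: "Suc a \<le> b" "b \<le> B"
  shows "(\<integral>\<^sup>+X. ennreal (\<Prod>k\<in>{a..<b}. kern \<beta> (tt k) (tt (Suc k)) ((X(a := x, b := z)) k) ((X(a := x, b := z)) (Suc k)))
            \<partial>(Pi\<^sub>M {a<..<b} (\<lambda>_. lborel))) = ennreal (kern \<beta> (tt a) (tt b) x z)"
  using ab
proof (induction b arbitrary: z rule: Nat.dec_induct)
  case base
  have e: "{a<..<Suc a} = {}" by auto
  show ?case unfolding e PiM_empty by (simp add: nn_integral_count_space_finite)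
next
  case (step b)
  interpret product_sigma_finite "\<lambda>_. lborel :: (real^'d) measure" by standard
  have ab': "a < b" using step by simp
  have bB: "b \<le> B" using step by simp
  have ins: "{a<..<Suc b} = insert b {a<..<b}" using step by auto
  have ta: "\<And>k. a \<le> k \<Longrightarrow> k \<le> B \<Longrightarrow> 0 \<le> tt k"
  proof -
    fix k assume "a \<le> k" "k \<le> B"
    then show "0 \<le> tt k" using tt_mono[OF inc, of a k] t0 by (cases "a = k") force+
  qed
  have tb: "\<And>k. a \<le> k \<Longrightarrow> k \<le> B \<Longrightarrow> tt k \<le> 1"
  proof -
    fix k assume "a \<le> k" "k \<le> B"
    then show "tt k \<le> 1" using tt_mono[OF inc, of k B] t1 by (cases "k = B") force+
  qed
  let ?f = "\<lambda>X. ennreal (\<Prod>k\<in>{a..<Suc b}. kern \<beta> (tt k) (tt (Suc k)) ((X(a := x, Suc b := z)) k) ((X(a := x, Suc b := z)) (Suc k)))"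
  have "(\<integral>\<^sup>+X. ?f X \<partial>(Pi\<^sub>M {a<..<Suc b} (\<lambda>_. lborel)))
      = (\<integral>\<^sup>+y. (\<integral>\<^sup>+X. ?f (X(b := y)) \<partial>(Pi\<^sub>M {a<..<b} (\<lambda>_. lborel))) \<partial>lborel)"
  proof -
    have mf: "?f \<in> borel_measurable (Pi\<^sub>M (insert b {a<..<b}) (\<lambda>_. lborel))"
      by measurable
    show ?thesis unfolding ins by (rule product_nn_integral_insert_rev[OF _ _ mf]) auto
  qed
  also have "\<dots> = (\<integral>\<^sup>+y. (\<integral>\<^sup>+X. ennreal (\<Prod>k\<in>{a..<b}. kern \<beta> (tt k) (tt (Suc k)) ((X(a := x, b := y)) k) ((X(a := x, b := y)) (Suc k)))
            * ennreal (kern \<beta> (tt b) (tt (Suc b)) y z) \<partial>(Pi\<^sub>M {a<..<b} (\<lambda>_. lborel))) \<partial>lborel)"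
  proof (intro nn_integral_cong)
    fix y X
    have p: "(\<Prod>k\<in>{a..<b}. kern \<beta> (tt k) (tt (Suc k)) ((X(b := y, a := x, Suc b := z)) k) ((X(b := y, a := x, Suc b := z)) (Suc k)))
       = (\<Prod>k\<in>{a..<b}. kern \<beta> (tt k) (tt (Suc k)) ((X(a := x, b := y)) k) ((X(a := x, b := y)) (Suc k)))"
      using ab' by (intro prod.cong refl) auto
    have q: "(X(b := y, a := x, Suc b := z)) b = y" "(X(b := y, a := x, Suc b := z)) (Suc b) = z"
      using ab' by auto
    have nn: "0 \<le> (\<Prod>k\<in>{a..<b}. kern \<beta> (tt k) (tt (Suc k)) ((X(a := x, b := y)) k) ((X(a := x, b := y)) (Suc k)))"
      unfolding kern_def using gdens_pos by (intro prod_nonneg) (simp add: gdens_def)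
    show "?f (X(b := y)) = ennreal (\<Prod>k\<in>{a..<b}. kern \<beta> (tt k) (tt (Suc k)) ((X(a := x, b := y)) k) ((X(a := x, b := y)) (Suc k)))
            * ennreal (kern \<beta> (tt b) (tt (Suc b)) y z)"
      apply (subst prod.atLeastLessThan_Suc[OF less_imp_le[OF ab']])
      unfolding p q using nn by (simp add: ennreal_mult')
  qed
  also have "\<dots> = (\<integral>\<^sup>+y. ennreal (kern \<beta> (tt a) (tt b) x y) * ennreal (kern \<beta> (tt b) (tt (Suc b)) y z) \<partial>lborel)"
  proof (intro nn_integral_cong)
    fix y :: "real^'d"
    have m: "(\<lambda>X. ennreal (\<Prod>k\<in>{a..<b}. kern \<beta> (tt k) (tt (Suc k)) ((X(a := x, b := y)) k) ((X(a := x, b := y)) (Suc k))))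
       \<in> borel_measurable (Pi\<^sub>M {a<..<b} (\<lambda>_. lborel))" by measurable
    show "(\<integral>\<^sup>+X. ennreal (\<Prod>k\<in>{a..<b}. kern \<beta> (tt k) (tt (Suc k)) ((X(a := x, b := y)) k) ((X(a := x, b := y)) (Suc k)))
            * ennreal (kern \<beta> (tt b) (tt (Suc b)) y z) \<partial>(Pi\<^sub>M {a<..<b} (\<lambda>_. lborel)))
        = ennreal (kern \<beta> (tt a) (tt b) x y) * ennreal (kern \<beta> (tt b) (tt (Suc b)) y z)"
      by (simp only: nn_integral_multc[OF m] step.IH[OF bB])
  qed
  also have "\<dots> = (\<integral>\<^sup>+y. ennreal (kern \<beta> (tt a) (tt b) x y * kern \<beta> (tt b) (tt (Suc b)) y z) \<partial>lborel)"
    by (intro nn_integral_cong) (simp add: ennreal_mult kern_def gdens_nonneg)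
  also have "\<dots> = ennreal (kern \<beta> (tt a) (tt (Suc b)) x z)"
    using step ab' tt_mono[OF inc, of a b] tt_mono[OF inc, of b "Suc b"] ta[of a] tb[of "Suc b"]
    by (intro CK[OF pos int]) auto
  finally show ?case .
qed




lemma telescope:
  fixes g h :: "nat \<Rightarrow> real"
  assumes "n \<le> m" and nz: "\<forall>k. n \<le> k \<and> k \<le> m \<longrightarrow> g k \<noteq> 0"
  shows "(\<Prod>k\<in>{n..<m}. g k * h k / g (Suc k)) = g n / g m * (\<Prod>k\<in>{n..<m}. h k)"
  using assms
proof (induction m rule: Nat.dec_induct)
  case base
  then show ?case by simp
next
  case (step m)
  have IH: "(\<Prod>k\<in>{n..<m}. g k * h k / g (Suc k)) = g n / g m * (\<Prod>k\<in>{n..<m}. h k)"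
    using step by simp
  have gm: "g m \<noteq> 0" using step by simp
  show ?case
    using step(1) by (simp add: prod.atLeastLessThan_Suc IH gm)
qed

lemma part2:
  fixes \<beta> :: "real \<Rightarrow> real" and tt :: "nat \<Rightarrow> real" and x0 xN x :: "real^'d"
  assumes pos: "\<forall>t\<in>{0..1}. \<beta> t > 0" and int: "\<beta> integrable_on {0..1}"
    and tt: "tt 0 = 0" "tt N = 1" "\<forall>k<N. tt k < tt (Suc k)"
    and n: "1 \<le> n" "n \<le> N - 1" and c: "\<Psi>h x0 0 * \<Psi> xN 1 > 0"
  shows "sb_post \<beta> \<Psi> \<Psi>h (tt n) x0 xN x =
             (\<integral>X. (\<Prod>k\<in>{n..<N}. ddpm_post \<beta> (tt k) (tt (Suc k)) x0
                         ((X(n := x, N := xN)) (Suc k)) ((X(n := x, N := xN)) k))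
                \<partial>(\<Pi>\<^sub>M i\<in>{n<..<N}. lborel))"
proof -
  have nN: "n < N" using n by simp
  have inc: "\<forall>k. 0 \<le> k \<and> k < N \<longrightarrow> tt k < tt (Suc k)" using tt by auto
  have incn: "\<forall>k. n \<le> k \<and> k < N \<longrightarrow> tt k < tt (Suc k)" using tt by auto
  have tpos: "\<And>k. 1 \<le> k \<Longrightarrow> k \<le> N \<Longrightarrow> 0 < tt k"
    using tt_mono[OF inc] tt by (metis less_le_trans order.refl zero_less_one le0 less_le_trans[of 0 1])
  have tle: "\<And>k. k \<le> N \<Longrightarrow> tt k \<le> 1"
    using tt_mono[OF inc] tt by (metis le0 le_less order.refl)
  have t01: "0 < tt n" "tt n < 1"
    using tpos[of n] n nN tt_mono[OF inc, of n N] tt by auto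
  have LHS: "sb_post \<beta> \<Psi> \<Psi>h (tt n) x0 xN x = kern \<beta> 0 (tt n) x0 x * kern \<beta> (tt n) 1 x xN / kern \<beta> 0 1 x0 xN"
    by (rule sb_post_eq[where \<Psi>h=\<Psi>h and \<Psi>=\<Psi> and pa=x0 and pb=xN, OF pos int t01 c])
  define C where "C = kern \<beta> 0 (tt n) x0 x / kern \<beta> 0 1 x0 xN"
  define P where "P = (\<lambda>X. \<Prod>k\<in>{n..<N}. kern \<beta> (tt k) (tt (Suc k)) ((X(n := x, N := xN)) k) ((X(n := x, N := xN)) (Suc k)))"
  have pw: "\<And>X. (\<Prod>k\<in>{n..<N}. ddpm_post \<beta> (tt k) (tt (Suc k)) x0
                         ((X(n := x, N := xN)) (Suc k)) ((X(n := x, N := xN)) k)) = C * P X"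
  proof -
    fix X :: "nat \<Rightarrow> real^'d"
    let ?Y = "X(n := x, N := xN)"
    have nz: "\<forall>k. n \<le> k \<and> k \<le> N \<longrightarrow> kern \<beta> 0 (tt k) x0 (?Y k) \<noteq> 0"
    proof (intro allI impI)
      fix k assume k: "n \<le> k \<and> k \<le> N"
      then have "0 < tt k" "tt k \<le> 1" using tpos[of k] tle[of k] n by auto
      then have "0 < kern \<beta> 0 (tt k) x0 (?Y k)" using kern_pos[OF pos int order_refl, of "tt k" x0 "?Y k"] by simp
      then show "kern \<beta> 0 (tt k) x0 (?Y k) \<noteq> 0" by simp
    qed
    have "(\<Prod>k\<in>{n..<N}. ddpm_post \<beta> (tt k) (tt (Suc k)) x0 (?Y (Suc k)) (?Y k))
        = (\<Prod>k\<in>{n..<N}. kern \<beta> 0 (tt k) x0 (?Y k) * kern \<beta> (tt k) (tt (Suc k)) (?Y k) (?Y (Suc k)) / kern \<beta> 0 (tt (Suc k)) x0 (?Y (Suc k)))"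
      unfolding ddpm_post_def ..
    also have "\<dots> = kern \<beta> 0 (tt n) x0 (?Y n) / kern \<beta> 0 (tt N) x0 (?Y N) * P X"
      unfolding P_def by (rule telescope[OF less_imp_le[OF nN] nz])
    also have "\<dots> = C * P X" unfolding C_def using nN tt by simp
    finally show "(\<Prod>k\<in>{n..<N}. ddpm_post \<beta> (tt k) (tt (Suc k)) x0 (?Y (Suc k)) (?Y k)) = C * P X" .
  qed
  have Pm: "P \<in> borel_measurable (\<Pi>\<^sub>M i\<in>{n<..<N}. lborel)" unfolding P_def by measurable
  have Pnn: "\<And>X. 0 \<le> P X" unfolding P_def kern_def by (intro prod_nonneg) (simp add: gdens_nonneg)
  have "(\<integral>X. P X \<partial>(\<Pi>\<^sub>M i\<in>{n<..<N}. lborel)) = enn2real (\<integral>\<^sup>+X. ennreal (P X) \<partial>(\<Pi>\<^sub>M i\<in>{n<..<N}. lborel))"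
    using Pm Pnn by (intro integral_eq_nn_integral) auto
  also have "(\<integral>\<^sup>+X. ennreal (P X) \<partial>(\<Pi>\<^sub>M i\<in>{n<..<N}. lborel)) = ennreal (kern \<beta> (tt n) (tt N) x xN)"
    unfolding P_def
    by (rule chain[OF pos int incn]) (use t01 tt nN in auto)
  also have "enn2real (ennreal (kern \<beta> (tt n) (tt N) x xN)) = kern \<beta> (tt n) 1 x xN"
    using tt kern_pos[OF pos int, of "tt n" 1 x xN] t01 by simp
  finally have IP: "(\<integral>X. P X \<partial>(\<Pi>\<^sub>M i\<in>{n<..<N}. lborel)) = kern \<beta> (tt n) 1 x xN" .
  show ?thesis
    unfolding LHS pw IP[symmetric] C_def by simp
qed



theorem proposition3:
  fixes \<beta> :: "real \<Rightarrow> real"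
    and \<Psi> \<Psi>h :: "real^'d \<Rightarrow> real \<Rightarrow> real"
    and \<rho>0 \<rho>1 :: "real^'d \<Rightarrow> real"
  assumes beta_pos: "\<forall>t\<in>{0..1}. \<beta> t > 0"
    and beta_int: "\<beta> integrable_on {0..1}"
    and Psi_nonneg: "\<forall>x. \<forall>t\<in>{0..1}. \<Psi> x t \<ge> 0 \<and> \<Psi>h x t \<ge> 0"
    and Psi1_meas: "(\<lambda>x. \<Psi> x 1) \<in> borel_measurable lborel"
    and Psih0_meas: "(\<lambda>x. \<Psi>h x 0) \<in> borel_measurable lborel"
    and Psi_eq: "\<forall>t\<in>{0..<1}. \<forall>x. \<Psi> x t = (\<integral>y. kern \<beta> t 1 x y * \<Psi> y 1 \<partial>lborel)"
    and Psih_eq: "\<forall>t\<in>{0<..1}. \<forall>x. \<Psi>h x t = (\<integral>y. kern \<beta> 0 t y x * \<Psi>h y 0 \<partial>lborel)"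
    and rho0_dens: "\<forall>x. \<rho>0 x \<ge> 0" "integrable lborel \<rho>0" "(\<integral>x. \<rho>0 x \<partial>lborel) = 1"
    and rho1_dens: "\<forall>x. \<rho>1 x \<ge> 0" "integrable lborel \<rho>1" "(\<integral>x. \<rho>1 x \<partial>lborel) = 1"
    and bc0: "\<forall>x. \<Psi> x 0 * \<Psi>h x 0 = \<rho>0 x"
    and bc1: "\<forall>x. \<Psi> x 1 * \<Psi>h x 1 = \<rho>1 x"
  shows
    "(\<forall>t\<in>{0<..<1}. \<forall>x0 x1 x. \<Psi>h x0 0 * \<Psi> x1 1 > 0 \<longrightarrow>
        sb_post \<beta> \<Psi> \<Psi>h t x0 x1 x =
          gdens (sig2 \<beta> t * sigbar2 \<beta> t / (sigbar2 \<beta> t + sig2 \<beta> t))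
                ((sigbar2 \<beta> t / (sigbar2 \<beta> t + sig2 \<beta> t)) *\<^sub>R x0
                   + (sig2 \<beta> t / (sigbar2 \<beta> t + sig2 \<beta> t)) *\<^sub>R x1) x)
     \<and>
     (\<forall>(N::nat) (tt::nat \<Rightarrow> real). tt 0 = 0 \<and> tt N = 1 \<and> (\<forall>k<N. tt k < tt (Suc k)) \<longrightarrow>
        (\<forall>n x0 xN x. 1 \<le> n \<and> n \<le> N - 1 \<and> \<Psi>h x0 0 * \<Psi> xN 1 > 0 \<longrightarrow>
           sb_post \<beta> \<Psi> \<Psi>h (tt n) x0 xN x =
             (\<integral>X. (\<Prod>k\<in>{n..<N}. ddpm_post \<beta> (tt k) (tt (Suc k)) x0
                         ((X(n := x, N := xN)) (Suc k)) ((X(n := x, N := xN)) k))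
                \<partial>(\<Pi>\<^sub>M i\<in>{n<..<N}. lborel))))"
proof (intro conjI allI impI ballI)
  fix t :: real and x0 x1 x :: "real^'d"
  assume t: "t \<in> {0<..<1}" and c: "0 < \<Psi>h x0 0 * \<Psi> x1 1"
  show "sb_post \<beta> \<Psi> \<Psi>h t x0 x1 x =
          gdens (sig2 \<beta> t * sigbar2 \<beta> t / (sigbar2 \<beta> t + sig2 \<beta> t))
                ((sigbar2 \<beta> t / (sigbar2 \<beta> t + sig2 \<beta> t)) *\<^sub>R x0
                   + (sig2 \<beta> t / (sigbar2 \<beta> t + sig2 \<beta> t)) *\<^sub>R x1) x"
    using t c by (intro part1[OF beta_pos beta_int]) auto
next
  fix N :: nat and tt :: "nat \<Rightarrow> real" and n :: nat and x0 xN x :: "real^'d"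
  assume h: "tt 0 = 0 \<and> tt N = 1 \<and> (\<forall>k<N. tt k < tt (Suc k))"
    and h2: "1 \<le> n \<and> n \<le> N - 1 \<and> 0 < \<Psi>h x0 0 * \<Psi> xN 1"
  show "sb_post \<beta> \<Psi> \<Psi>h (tt n) x0 xN x =
             (\<integral>X. (\<Prod>k\<in>{n..<N}. ddpm_post \<beta> (tt k) (tt (Suc k)) x0
                         ((X(n := x, N := xN)) (Suc k)) ((X(n := x, N := xN)) k))
                \<partial>(\<Pi>\<^sub>M i\<in>{n<..<N}. lborel))"
    using h h2 by (intro part2[OF beta_pos beta_int]) auto
qed

end
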